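(* Let $k$ be a field of characteristic $0$, let $A$ be a $k$-algebra, let $\mathfrak{p}$ be a prime ideal of $A$, and let $\alpha\colon A\to K[t]/(t^{m+1})$ be an $m$-jet of $A$ centered at $\mathfrak{p}$ and valued in a field extension $K/k$. Suppose that for some field extension $E/K$ there is a $k$-algebra map $A\to E[t]/(t^{m+2})$ whose reduction modulo $t^{m+1}$ equals $\alpha$ composed with $K[t]/(t^{m+1})\to E[t]/(t^{m+1})$. Then there is a $k$-algebra map $\beta\colon A\to K[t]/(t^{m+2})$ whose reduction modulo $t^{m+1}$ equals $\alpha$.
   Context: An $m$-jet of a $k$-algebra $A$ valued in $K$ is a $k$-algebra homomorphism $A\to K[t]/(t^{m+1})$; its center is the kernel of its reduction modulo $t$, a prime ideal. *)

theory Defs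
  imports "HOL-Computational_Algebra.Polynomial"
begin

definition is_ring_hom :: "('a::comm_ring_1 \<Rightarrow> 'b::comm_ring_1) \<Rightarrow> bool" where
  "is_ring_hom f \<longleftrightarrow> f 1 = 1 \<and> (\<forall>x y. f (x + y) = f x + f y) \<and> (\<forall>x y. f (x * y) = f x * f y)"

definition is_prime_ideal :: "'a::comm_ring_1 set \<Rightarrow> bool" where
  "is_prime_ideal P \<longleftrightarrow> 0 \<in> P \<and> (\<forall>x\<in>P. \<forall>y\<in>P. x + y \<in> P) \<and> (\<forall>x\<in>P. \<forall>r. r * x \<in> P)
     \<and> 1 \<notin> P \<and> (\<forall>x y. x * y \<in> P \<longrightarrow> x \<in> P \<or> y \<in> P)"

text \<open>The truncated polynomial ring L[t]/(t^(n)) is modelled by polynomials of degree < n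
  (canonical representatives), with multiplication followed by \<open>poly_cutoff n\<close>.
  \<open>is_jet \<iota>A \<iota>L m \<phi>\<close>: \<phi> is a k-algebra homomorphism A \<rightarrow> L[t]/(t^(m+1)),
  where the k-algebra structures of A and L are given by the ring homomorphisms
  \<iota>A : k \<rightarrow> A and \<iota>L : k \<rightarrow> L.\<close>
definition is_jet ::
  "('k::field \<Rightarrow> 'a::comm_ring_1) \<Rightarrow> ('k \<Rightarrow> 'l::field) \<Rightarrow> nat \<Rightarrow> ('a \<Rightarrow> 'l poly) \<Rightarrow> bool" where
  "is_jet \<iota>A \<iota>L m \<phi> \<longleftrightarrow>
     (\<forall>a. degree (\<phi> a) \<le> m) \<and>
     \<phi> 1 = 1 \<and>
     (\<forall>a b. \<phi> (a + b) = \<phi> a + \<phi> b) \<and>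
     (\<forall>a b. \<phi> (a * b) = poly_cutoff (Suc m) (\<phi> a * \<phi> b)) \<and>
     (\<forall>c. \<phi> (\<iota>A c) = [:\<iota>L c:])"

definition jet_center :: "('a \<Rightarrow> 'l::zero poly) \<Rightarrow> 'a set" where
  "jet_center \<phi> = {a. coeff (\<phi> a) 0 = 0}"

end

theory Submission
  imports Defs
begin

lemma retraction_exists:
  fixes j :: "'K::field \<Rightarrow> 'E::field"
  assumes "is_ring_hom j"
  shows "\<exists>l. (\<forall>x y. l (x+y) = l x + l y) \<and> (\<forall>c e. l (j c * e) = c * l e) \<and> l 1 = 1"
proof -
  have h: "j 1 = 1" "\<And>x y. j (x+y) = j x + j y" "\<And>x y. j (x*y) = j x * j y"
    using assms unfolding is_ring_hom_def by auto
  interpret V1: vector_space "\<lambda>c e. j c * e"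
    by unfold_locales (auto simp: h algebra_simps)
  interpret V2: vector_space "(*) :: 'K \<Rightarrow> 'K \<Rightarrow> 'K"
    by unfold_locales (auto simp: algebra_simps)
  interpret VP: vector_space_pair "\<lambda>c e. j c * e" "(*) :: 'K \<Rightarrow> 'K \<Rightarrow> 'K"
    by unfold_locales
  have "V1.independent {1}"
    by (simp add: V1.independent_insert)
  from VP.linear_independent_extend[OF this, of "\<lambda>_. 1"]
  obtain g where g: "Vector_Spaces.linear (\<lambda>c e. j c * e) (*) g" "g 1 = 1" by auto
  have "\<forall>x y. g (x+y) = g x + g y" using g(1) by (simp add: Vector_Spaces.linear_iff)
  moreover have "\<forall>c e. g (j c * e) = c * g e" using g(1) by (simp add: Vector_Spaces.linear_iff)
  ultimately show ?thesis using g(2) by blast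
qed


lemma add_hom_sum:
  fixes l :: "'a::comm_monoid_add \<Rightarrow> 'b::ab_group_add"
  assumes "\<forall>x y. l (x+y) = l x + l y"
  shows "l (sum f S) = (\<Sum>i\<in>S. l (f i))"
proof -
  have l0: "l 0 = 0"
  proof -
    have "l 0 + 0 = l (0 + 0)" by (simp only: add_0_right)
    also have "\<dots> = l 0 + l 0" by (rule assms[rule_format])
    finally have "l 0 + 0 = l 0 + l 0" .
    then show ?thesis by (rule add_left_imp_eq[THEN sym])
  qed
  show ?thesis
  proof (cases "finite S")
    case True then show ?thesis by (induction S rule: finite_induct) (auto simp: l0 assms)
  qed (simp add: l0)
qed

theorem proposition3p8:
  fixes \<iota>A :: "'k::field_char_0 \<Rightarrow> 'a::comm_ring_1"
    and \<iota>K :: "'k \<Rightarrow> 'K::field"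
    and j :: "'K \<Rightarrow> 'E::field"
    and P :: "'a set"
    and m :: nat
    and \<alpha> :: "'a \<Rightarrow> 'K poly"
    and \<gamma> :: "'a \<Rightarrow> 'E poly"
  assumes "is_ring_hom \<iota>A"
    and "is_ring_hom \<iota>K"
    and "is_ring_hom j"
    and "is_prime_ideal P"
    and "is_jet \<iota>A \<iota>K m \<alpha>"
    and "jet_center \<alpha> = P"
    and "is_jet \<iota>A (j \<circ> \<iota>K) (Suc m) \<gamma>"
    and "\<forall>a. poly_cutoff (Suc m) (\<gamma> a) = map_poly j (\<alpha> a)"
  shows "\<exists>\<beta>. is_jet \<iota>A \<iota>K (Suc m) \<beta> \<and> (\<forall>a. poly_cutoff (Suc m) (\<beta> a) = \<alpha> a)"
proof -
  obtain l where ladd: "\<forall>x y. l (x+y) = l x + l y" and lj: "\<forall>c e. l (j c * e) = c * l e"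
    and l1: "l 1 = 1"
    using retraction_exists[OF assms(3)] by blast
  have l0: "l 0 = 0"
  proof -
    have "l 0 + 0 = l (0 + 0)" by (simp only: add_0_right)
    also have "\<dots> = l 0 + l 0" by (rule ladd[rule_format])
    finally have "l 0 + 0 = l 0 + l 0" .
    then show ?thesis by (rule add_left_imp_eq[THEN sym])
  qed
  have lj1: "l (j c) = c" for c using lj[rule_format, of c 1] l1 by simp
  have j0: "j 0 = 0"
  proof -
    have jadd: "\<forall>x y. j (x + y) = j x + j y" using assms(3) unfolding is_ring_hom_def by blast
    have "j 0 + 0 = j (0 + 0)" by (simp only: add_0_right)
    also have "\<dots> = j 0 + j 0" by (rule jadd[rule_format])
    finally have "j 0 + 0 = j 0 + j 0" .
    then show ?thesis by (rule add_left_imp_eq[THEN sym])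
  qed
  have jm: "j (x*y) = j x * j y" for x y using assms(3) unfolding is_ring_hom_def by auto
  have A: "\<forall>a. degree (\<alpha> a) \<le> m" "\<alpha> 1 = 1" "\<forall>a b. \<alpha> (a + b) = \<alpha> a + \<alpha> b"
    "\<forall>a b. \<alpha> (a * b) = poly_cutoff (Suc m) (\<alpha> a * \<alpha> b)" "\<forall>c. \<alpha> (\<iota>A c) = [:\<iota>K c:]"
    using assms(5) unfolding is_jet_def by auto
  have G: "\<forall>a. degree (\<gamma> a) \<le> Suc m" "\<gamma> 1 = 1" "\<forall>a b. \<gamma> (a + b) = \<gamma> a + \<gamma> b"
    "\<forall>a b. \<gamma> (a * b) = poly_cutoff (Suc (Suc m)) (\<gamma> a * \<gamma> b)" "\<forall>c. \<gamma> (\<iota>A c) = [:j (\<iota>K c):]"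
    using assms(7) unfolding is_jet_def by auto
  have low: "coeff (\<gamma> a) i = j (coeff (\<alpha> a) i)" if "i \<le> m" for a i
  proof -
    have "coeff (poly_cutoff (Suc m) (\<gamma> a)) i = coeff (map_poly j (\<alpha> a)) i"
      using assms(8) by simp
    then show ?thesis using that by (simp add: coeff_poly_cutoff coeff_map_poly j0)
  qed
  have lmul: "l (coeff (\<gamma> a) i * coeff (\<gamma> b) k) = l (coeff (\<gamma> a) i) * l (coeff (\<gamma> b) k)"
    if "i + k \<le> Suc m" for a b i k
  proof (cases "i \<le> m")
    case True
    then show ?thesis using low[OF True] lj lj1 by simp
  next
    case False
    have km: "k \<le> m" using that False by auto
    show ?thesis using low[OF km] lj lj1 by (simp add: mult.commute)
  qed
  define \<beta> where "\<beta> a = map_poly l (\<gamma> a)" for a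
  have cb: "coeff (\<beta> a) n = l (coeff (\<gamma> a) n)" for a n
    by (simp add: \<beta>_def coeff_map_poly l0)
  have "is_jet \<iota>A \<iota>K (Suc m) \<beta>"
    unfolding is_jet_def
  proof (intro conjI allI)
    fix a show "degree (\<beta> a) \<le> Suc m"
      proof (rule degree_le, intro allI impI)
      fix i assume "Suc m < i"
      then have "degree (\<gamma> a) < i" using G(1) by (meson le_less_trans)
      then show "coeff (\<beta> a) i = 0" by (simp add: cb coeff_eq_0 l0)
    qed
  next
    show "\<beta> 1 = 1" by (simp add: poly_eq_iff cb G(2) l0 l1 coeff_1)
  next
    fix a b show "\<beta> (a + b) = \<beta> a + \<beta> b" by (simp add: poly_eq_iff cb G(3) ladd)
  next
    fix a b show "\<beta> (a * b) = poly_cutoff (Suc (Suc m)) (\<beta> a * \<beta> b)"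
    proof (rule poly_eqI)
      fix n
      show "coeff (\<beta> (a * b)) n = coeff (poly_cutoff (Suc (Suc m)) (\<beta> a * \<beta> b)) n"
      proof (cases "n < Suc (Suc m)")
        case True
        have "coeff (\<beta> (a * b)) n = l (\<Sum>i\<le>n. coeff (\<gamma> a) i * coeff (\<gamma> b) (n - i))"
          using True by (simp add: cb G(4) coeff_poly_cutoff coeff_mult)
        also have "\<dots> = (\<Sum>i\<le>n. l (coeff (\<gamma> a) i * coeff (\<gamma> b) (n - i)))"
          by (rule add_hom_sum[OF ladd])
        also have "\<dots> = (\<Sum>i\<le>n. coeff (\<beta> a) i * coeff (\<beta> b) (n - i))"
          using True by (intro sum.cong refl) (simp add: cb lmul)
        finally show ?thesis using True by (simp add: coeff_poly_cutoff coeff_mult)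
      next
        case False
        then show ?thesis by (simp add: cb G(4) coeff_poly_cutoff l0)
      qed
    qed
  next
    fix c show "\<beta> (\<iota>A c) = [:\<iota>K c:]"
      by (simp add: poly_eq_iff cb G(5) coeff_pCons l0 lj1 split: nat.split)
  qed
  moreover have "poly_cutoff (Suc m) (\<beta> a) = \<alpha> a" for a
  proof (rule poly_eqI)
    fix n show "coeff (poly_cutoff (Suc m) (\<beta> a)) n = coeff (\<alpha> a) n"
    proof (cases "n \<le> m")
      case True then show ?thesis by (simp add: coeff_poly_cutoff cb low lj1)
    next
      case False
      then have "degree (\<alpha> a) < n" using A(1) by (meson le_less_trans not_le)
      then show ?thesis using False by (simp add: coeff_poly_cutoff coeff_eq_0)
    qed
  qed
  ultimately show ?thesis by blast
qed

end
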